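(* Let $\kappa > 1$. Consider a finite set $\mathcal{S}$ of sensors placed in a square region $R$ of dimensions $s \times s$, where each sensor $i$ has sensing region $D_i$ equal to the closed disk of radius $1$ centered at its location, and each sensor has an initial battery life of $1$ unit of time. Let $d_R$ denote the depth of $R$ (defined below) and let $\mathcal{L}^*$ denote the maximum lifetime of the system under optimal scheduling (defined below). Then $\mathcal{L}^* = O(\kappa \cdot d_R)$, i.e., there is an absolute constant $c>0$, independent of the instance, such that $\mathcal{L}^* \le c\,\kappa\, d_R$.
   Context: A pair of points $(p,q)$ is a $\kappa$-pair if the distance between them is $\kappa$. A curve is a $\kappa$-curve if its endpoints form a $\kappa$-pair. A set of sensors $C \subseteq \mathcal{S}$ is a $\kappa$-weak cover if every $\kappa$-curve contained in $R$ intersects $\bigcup_{i \in C} D_i$. A point $p$ is covered by sensor $i$ if $p \in D_i$. The depth of a point $p$ is the number of sensors in $\mathcal{S}$ covering $p$, and the depth $d_R$ of the region $R$ is the maximum depth of any point of $R$. A schedule consists of a collection $\{C_1,\dots,C_k\}$ of $\kappa$-weak covers together with activation times $\delta_1,\dots,\delta_k \ge 0$ (cover $C_j$ is active for time $\delta_j$), subject to the battery constraint that each sensor's total active time $\sum_{j : i \in C_j} \delta_j$ is at most its battery life $1$. The lifetime of such a schedule is $\sum_{j=1}^k \delta_j$, and $\mathcal{L}^*$ is the maximum (supremum) lifetime over all such schedules. *)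

theory Defs
  imports "HOL-Analysis.Analysis"
begin

text \<open>Points of the plane are pairs of reals (product metric = Euclidean metric).
  Sensors are indexed by a finite set S of naturals; sensor i sits at loc i and senses the
  closed unit disk around it.\<close>

definition square :: "real \<Rightarrow> (real \<times> real) set" where
  "square s = cbox (0,0) (s,s)"

definition disk :: "(nat \<Rightarrow> real \<times> real) \<Rightarrow> nat \<Rightarrow> (real \<times> real) set" where
  "disk loc i = cball (loc i) 1"

definition kappa_pair :: "real \<Rightarrow> real \<times> real \<Rightarrow> real \<times> real \<Rightarrow> bool" where
  "kappa_pair \<kappa> p q \<longleftrightarrow> dist p q = \<kappa>"

definition kappa_curve :: "real \<Rightarrow> (real \<Rightarrow> real \<times> real) \<Rightarrow> bool" where
  "kappa_curve \<kappa> g \<longleftrightarrow> path g \<and> kappa_pair \<kappa> (pathstart g) (pathfinish g)"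

definition weak_cover ::
  "real \<Rightarrow> (real \<times> real) set \<Rightarrow> (nat \<Rightarrow> real \<times> real) \<Rightarrow> nat set \<Rightarrow> nat set \<Rightarrow> bool" where
  "weak_cover \<kappa> R loc S C \<longleftrightarrow> C \<subseteq> S \<and>
     (\<forall>g. kappa_curve \<kappa> g \<and> path_image g \<subseteq> R \<longrightarrow>
          path_image g \<inter> (\<Union>i\<in>C. disk loc i) \<noteq> {})"

definition depth :: "(nat \<Rightarrow> real \<times> real) \<Rightarrow> nat set \<Rightarrow> real \<times> real \<Rightarrow> nat" where
  "depth loc S p = card {i \<in> S. p \<in> disk loc i}"

definition region_depth :: "(nat \<Rightarrow> real \<times> real) \<Rightarrow> nat set \<Rightarrow> (real \<times> real) set \<Rightarrow> nat" where
  "region_depth loc S R = Max (depth loc S ` R)"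

definition schedule ::
  "real \<Rightarrow> (real \<times> real) set \<Rightarrow> (nat \<Rightarrow> real \<times> real) \<Rightarrow> nat set
   \<Rightarrow> nat \<Rightarrow> (nat \<Rightarrow> nat set) \<Rightarrow> (nat \<Rightarrow> real) \<Rightarrow> bool" where
  "schedule \<kappa> R loc S k C \<delta> \<longleftrightarrow>
     (\<forall>j<k. weak_cover \<kappa> R loc S (C j) \<and> \<delta> j \<ge> 0) \<and>
     (\<forall>i\<in>S. (\<Sum>j\<in>{j. j < k \<and> i \<in> C j}. \<delta> j) \<le> 1)"

definition lifetimes :: "real \<Rightarrow> (real \<times> real) set \<Rightarrow> (nat \<Rightarrow> real \<times> real) \<Rightarrow> nat set \<Rightarrow> real set" where
  "lifetimes \<kappa> R loc S = {(\<Sum>j<k. \<delta> j) | k C \<delta>. schedule \<kappa> R loc S k C \<delta>}"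

text \<open>L* = Sup of lifetimes; "L* \<le> B" is stated as: every schedule lifetime is \<le> B.\<close>
definition max_lifetime :: "real \<Rightarrow> (real \<times> real) set \<Rightarrow> (nat \<Rightarrow> real \<times> real) \<Rightarrow> nat set \<Rightarrow> real" where
  "max_lifetime \<kappa> R loc S = Sup (lifetimes \<kappa> R loc S)"

end

theory Submission imports Defs begin

lemma depth_le_region:
  assumes "finite S" "p \<in> square s"
  shows "depth loc S p \<le> region_depth loc S (square s)"
proof -
  have "depth loc S ` square s \<subseteq> {..card S}"
    unfolding depth_def using assms(1) by (auto intro!: card_mono)
  hence "finite (depth loc S ` square s)" using finite_subset by blast
  thus ?thesis unfolding region_depth_def using assms(2) by (intro Max_ge) auto
qed

lemma floor_close:
  fixes u v :: real
  assumes "(floor (2 * u)) = (floor (2 * v))"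
  shows "\<bar>u - v\<bar> < 1/2"
proof -
  have "of_int (floor (2 * u)) \<le> 2 * u" "2 * u < of_int (floor (2 * u)) + 1" by linarith+
  moreover have "of_int (floor (2 * v)) \<le> 2 * v" "2 * v < of_int (floor (2 * v)) + 1" by linarith+
  ultimately show ?thesis using assms by linarith
qed

lemma sq_small:
  fixes u :: real assumes "\<bar>u\<bar> < 1/2" shows "u^2 \<le> 1/4"
proof -
  have "\<bar>u\<bar> * \<bar>u\<bar> \<le> (1/2) * (1/2)" using assms by (intro mult_mono) auto
  thus ?thesis by (simp add: power2_eq_square)
qed

lemma fiber_bound:
  fixes loc :: "nat \<Rightarrow> real \<times> real"
  assumes "finite S" "T \<subseteq> S" "\<forall>i\<in>T. loc i \<in> square s"
  shows "card {i\<in>T. ((floor (2 * fst (loc i))), (floor (2 * snd (loc i)))) = z} \<le> region_depth loc S (square s)"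
proof (cases "{i\<in>T. ((floor (2 * fst (loc i))), (floor (2 * snd (loc i)))) = z} = {}")
  case True show ?thesis by (metis True card.empty le0)
next
  case False
  then obtain i0 where i0: "i0 \<in> T" "((floor (2 * fst (loc i0))), (floor (2 * snd (loc i0)))) = z" by auto
  have sub: "{i\<in>T. ((floor (2 * fst (loc i))), (floor (2 * snd (loc i)))) = z} \<subseteq> {i\<in>S. loc i0 \<in> disk loc i}"
  proof
    fix i assume "i \<in> {i\<in>T. ((floor (2 * fst (loc i))), (floor (2 * snd (loc i)))) = z}"
    hence i: "i \<in> T" "(floor (2 * fst (loc i))) = (floor (2 * fst (loc i0)))" "(floor (2 * snd (loc i))) = (floor (2 * snd (loc i0)))"
      using i0 by auto
    have a: "\<bar>fst (loc i) - fst (loc i0)\<bar> < 1/2" "\<bar>snd (loc i) - snd (loc i0)\<bar> < 1/2"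
      using floor_close i by blast+
    have "(fst (loc i) - fst (loc i0))^2 \<le> 1/4"
      using a(1) by (rule sq_small)
    moreover have "(snd (loc i) - snd (loc i0))^2 \<le> 1/4"
      using a(2) by (rule sq_small)
    ultimately have "(dist (fst (loc i)) (fst (loc i0)))^2 + (dist (snd (loc i)) (snd (loc i0)))^2 \<le> 1"
      by (simp add: dist_real_def power2_abs)
    hence "dist (loc i) (loc i0) \<le> 1"
      by (metis dist_Pair_Pair prod.collapse real_sqrt_le_1_iff)
    thus "i \<in> {i\<in>S. loc i0 \<in> disk loc i}" using i assms(2) by (auto simp: disk_def)
  qed
  have "card {i\<in>T. ((floor (2 * fst (loc i))), (floor (2 * snd (loc i)))) = z} \<le> depth loc S (loc i0)"
    unfolding depth_def using sub assms(1) by (intro card_mono) auto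
  also have "\<dots> \<le> region_depth loc S (square s)"
    using depth_le_region assms i0 by blast
  finally show ?thesis .
qed

lemma card_int_ivl:
  fixes x0 w :: real assumes "w \<ge> 0"
  shows "real (card {(floor (2 * x0))..(floor (2 * x0+2 * w))}) \<le> 2 * w+2"
proof -
  have "card {(floor (2 * x0))..(floor (2 * x0+2 * w))} = nat ((floor (2 * x0+2 * w)) + 1 - (floor (2 * x0)))" by simp
  moreover have "(floor (2 * x0+2 * w)) + 1 - (floor (2 * x0)) \<ge> 0" using assms by (smt (verit) floor_mono)
  moreover have "real_of_int ((floor (2 * x0+2 * w)) + 1 - (floor (2 * x0))) \<le> 2 * w+2"
  proof -
    have "real_of_int (floor (2 * x0+2 * w)) \<le> 2 * x0+2 * w" by linarith
    moreover have "real_of_int (floor (2 * x0)) > 2 * x0 - 1" by linarith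
    ultimately show ?thesis by linarith
  qed
  ultimately show ?thesis by simp
qed

lemma box_count:
  fixes loc :: "nat \<Rightarrow> real \<times> real"
  assumes "finite S" "T \<subseteq> S" "\<forall>i\<in>T. loc i \<in> square s" "w \<ge> 0" "h \<ge> 0"
    "\<forall>i\<in>T. x0 \<le> fst(loc i) \<and> fst(loc i) \<le> x0+w \<and> y0 \<le> snd(loc i) \<and> snd(loc i) \<le> y0+h"
  shows "real (card T) \<le> (2 * w+2) * (2 * h+2) * real(region_depth loc S (square s))"
proof -
  define f where "f i = ((floor (2 * fst (loc i))), (floor (2 * snd (loc i))))" for i
  define d where "d = region_depth loc S (square s)"
  have fT: "finite T" using assms finite_subset by blast
  have img: "f ` T \<subseteq> {(floor (2 * x0))..(floor (2 * x0+2 * w))} \<times> {(floor (2 * y0))..(floor (2 * y0+2 * h))}"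
  proof
    fix z assume "z \<in> f ` T"
    then obtain i where i: "i \<in> T" "z = f i" by auto
    from assms(6) i(1) have h: "x0 \<le> fst (loc i)" "fst (loc i) \<le> x0+w" "y0 \<le> snd (loc i)" "snd (loc i) \<le> y0+h"
      by auto
    hence "2 * x0 \<le> 2 * fst (loc i)" "2 * fst (loc i) \<le> 2 * x0 + 2 * w"
      "2 * y0 \<le> 2 * snd (loc i)" "2 * snd (loc i) \<le> 2 * y0 + 2 * h" by linarith+
    hence "floor (2 * x0) \<le> floor (2 * fst (loc i))" "floor (2 * fst (loc i)) \<le> floor (2 * x0 + 2 * w)"
      "floor (2 * y0) \<le> floor (2 * snd (loc i))" "floor (2 * snd (loc i)) \<le> floor (2 * y0 + 2 * h)"
      by (simp_all add: floor_mono)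
    thus "z \<in> {(floor (2 * x0))..(floor (2 * x0+2 * w))} \<times> {(floor (2 * y0))..(floor (2 * y0+2 * h))}"
      using i(2) by (simp add: f_def)
  qed
  have cimg: "real (card (f ` T)) \<le> (2 * w+2) * (2 * h+2)"
  proof -
    have "card (f ` T) \<le> card ({(floor (2 * x0))..(floor (2 * x0+2 * w))} \<times> {(floor (2 * y0))..(floor (2 * y0+2 * h))})"
      by (rule card_mono[OF _ img]) simp
    also have "\<dots> = card {(floor (2 * x0))..(floor (2 * x0+2 * w))} * card {(floor (2 * y0))..(floor (2 * y0+2 * h))}"
      by (simp add: card_cartesian_product)
    finally have "real (card (f ` T)) \<le> real (card {(floor (2 * x0))..(floor (2 * x0+2 * w))}) * real (card {(floor (2 * y0))..(floor (2 * y0+2 * h))})"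
      by (metis of_nat_le_iff of_nat_mult)
    also have "\<dots> \<le> (2 * w+2) * (2 * h+2)"
      using card_int_ivl[OF assms(4), of x0] card_int_ivl[OF assms(5), of y0]
      by (intro mult_mono) auto
    finally show ?thesis .
  qed
  have "T = (\<Union>z\<in>f ` T. {i\<in>T. f i = z})" by auto
  hence "card T \<le> (\<Sum>z\<in>f ` T. card {i\<in>T. f i = z})"
    by (metis card_UN_le fT finite_imageI)
  also have "\<dots> \<le> (\<Sum>z\<in>f ` T. d)"
    using fiber_bound[OF assms(1-3)] by (intro sum_mono) (simp add: f_def d_def)
  also have "\<dots> = card (f ` T) * d" by simp
  finally have "real (card T) \<le> real (card (f ` T)) * real d"
    by (metis of_nat_le_iff of_nat_mult)
  also have "\<dots> \<le> (2 * w+2) * (2 * h+2) * real d"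
    using cimg by (intro mult_right_mono) auto
  finally show ?thesis by (simp add: d_def)
qed

lemma lifetime_le_card:
  assumes sch: "schedule \<kappa> R loc S k C \<delta>" and fS: "finite S"
    and g: "kappa_curve \<kappa> g" "path_image g \<subseteq> R"
  shows "(\<Sum>j<k. \<delta> j) \<le> real (card {i\<in>S. disk loc i \<inter> path_image g \<noteq> {}})"
proof -
  define T where "T = {i\<in>S. disk loc i \<inter> path_image g \<noteq> {}}"
  have fT: "finite T" using fS by (simp add: T_def)
  have step: "\<delta> j \<le> (\<Sum>i\<in>T. if i \<in> C j then \<delta> j else 0)" if j: "j < k" for j
  proof -
    have wc: "weak_cover \<kappa> R loc S (C j)" and d0: "\<delta> j \<ge> 0" using sch j by (auto simp: schedule_def)
    hence "path_image g \<inter> (\<Union>i\<in>C j. disk loc i) \<noteq> {}" "C j \<subseteq> S"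
      using g by (auto simp: weak_cover_def)
    then obtain i0 where i0: "i0 \<in> C j" "i0 \<in> T" unfolding T_def by blast
    have "\<delta> j = (if i0 \<in> C j then \<delta> j else 0)" using i0 by simp
    also have "\<dots> \<le> (\<Sum>i\<in>T. if i \<in> C j then \<delta> j else 0)"
      by (rule member_le_sum[OF i0(2)]) (use d0 fT in auto)
    finally show ?thesis .
  qed
  have "(\<Sum>j<k. \<delta> j) \<le> (\<Sum>j<k. \<Sum>i\<in>T. if i \<in> C j then \<delta> j else 0)"
    by (rule sum_mono) (simp add: step)
  also have "\<dots> = (\<Sum>i\<in>T. \<Sum>j<k. if i \<in> C j then \<delta> j else 0)"
    by (rule sum.swap)
  also have "\<dots> = (\<Sum>i\<in>T. \<Sum>j\<in>{j. j < k \<and> i \<in> C j}. \<delta> j)"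
  proof (rule sum.cong[OF refl])
    fix i
    have "{j. j < k \<and> i \<in> C j} = {j\<in>{..<k}. i \<in> C j}" by auto
    thus "(\<Sum>j<k. if i \<in> C j then \<delta> j else 0) = (\<Sum>j\<in>{j. j < k \<and> i \<in> C j}. \<delta> j)"
      using sum.inter_filter[of "{..<k}" \<delta> "\<lambda>j. i \<in> C j"] by simp
  qed
  also have "\<dots> \<le> (\<Sum>i\<in>T. 1)"
    using sch by (intro sum_mono) (auto simp: schedule_def T_def)
  finally show ?thesis by (simp add: T_def)
qed

theorem theorem1:
  shows "\<exists>c>0. \<forall>\<kappa> s (S::nat set) loc.
     \<kappa> > 1 \<and> finite S \<and> (\<forall>i\<in>S. loc i \<in> square s) \<and>
     (\<exists>p\<in>square s. \<exists>q\<in>square s. kappa_pair \<kappa> p q) \<longrightarrow>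
     (\<forall>L\<in>lifetimes \<kappa> (square s) loc S.
        L \<le> c * \<kappa> * real (region_depth loc S (square s)))"
proof (intro exI[of _ 60] conjI allI impI ballI)
  fix \<kappa> s and S :: "nat set" and loc and L
  assume H: "1 < \<kappa> \<and> finite S \<and> (\<forall>i\<in>S. loc i \<in> square s) \<and>
     (\<exists>p\<in>square s. \<exists>q\<in>square s. kappa_pair \<kappa> p q)"
    and L: "L \<in> lifetimes \<kappa> (square s) loc S"
  have k1: "\<kappa> > 1" and fS: "finite S" and inS: "\<forall>i\<in>S. loc i \<in> square s" using H by auto
  obtain p q where pq: "p \<in> square s" "q \<in> square s" "dist p q = \<kappa>"
    using H by (auto simp: kappa_pair_def)
  obtain k C \<delta> where sch: "schedule \<kappa> (square s) loc S k C \<delta>" and Ld: "L = (\<Sum>j<k. \<delta> j)"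
    using L by (auto simp: lifetimes_def)
  define a where "a = \<bar>fst p - fst q\<bar>"
  define b where "b = \<bar>snd p - snd q\<bar>"
  have sq: "\<And>x. x \<in> square s \<longleftrightarrow> 0 \<le> fst x \<and> fst x \<le> s \<and> 0 \<le> snd x \<and> snd x \<le> s"
    by (auto simp: square_def cbox_Pair_eq mem_Times_iff)
  have ab: "0 \<le> a" "a \<le> s" "0 \<le> b" "b \<le> s"
    using pq(1,2) unfolding sq a_def b_def by auto
  have kab: "\<kappa> = sqrt (a^2 + b^2)"
    using pq(3) by (metis dist_Pair_Pair prod.collapse dist_real_def a_def b_def)
  have akb: "a \<le> \<kappa>" "b \<le> \<kappa>" unfolding kab using ab
    by (auto intro: real_le_rsqrt)
  define g where "g = linepath (0::real,0::real) (a,0) +++ linepath (a,0) (a,b)"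
  have pig: "path_image g = closed_segment (0,0) (a,0) \<union> closed_segment (a,0) (a,b)"
    by (simp add: g_def path_image_join)
  have kc: "kappa_curve \<kappa> g"
    unfolding kappa_curve_def kappa_pair_def g_def
    by (simp add: dist_Pair_Pair kab dist_real_def)
  have c1: "closed_segment (0::real,0::real) (a,0) \<subseteq> cbox (0,0) (a,0)"
    using ab by (intro closed_segment_subset convex_box(1)) (auto simp: cbox_Pair_eq)
  have c2: "closed_segment (a,0::real) (a,b) \<subseteq> cbox (a,0) (a,b)"
    using ab by (intro closed_segment_subset convex_box(1)) (auto simp: cbox_Pair_eq)
  have "cbox (0::real,0::real) (a,0) \<subseteq> square s" "cbox (a,0::real) (a,b) \<subseteq> square s"
    using ab by (auto simp: square_def cbox_Pair_eq mem_Times_iff)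
  hence pis: "path_image g \<subseteq> square s" using pig c1 c2 by blast
  define T where "T = {i\<in>S. disk loc i \<inter> path_image g \<noteq> {}}"
  have "L \<le> real (card T)" unfolding Ld T_def by (rule lifetime_le_card[OF sch fS kc pis])
  define T1 where "T1 = {i\<in>T. 0 \<le> fst (loc i) \<and> fst (loc i) \<le> 0 + (a+1) \<and> 0 \<le> snd (loc i) \<and> snd (loc i) \<le> 0 + 1}"
  define T2 where "T2 = {i\<in>T. a-1 \<le> fst (loc i) \<and> fst (loc i) \<le> (a-1) + 2 \<and> 0 \<le> snd (loc i) \<and> snd (loc i) \<le> 0 + (b+1)}"
  have TS: "T \<subseteq> S" by (auto simp: T_def)
  have "T \<subseteq> T1 \<union> T2"
  proof
    fix i assume iT: "i \<in> T"
    then obtain x where x: "x \<in> disk loc i" "x \<in> path_image g" by (auto simp: T_def)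
    have dx: "dist (loc i) x \<le> 1" using x(1) by (simp add: disk_def)
    have d1: "\<bar>fst (loc i) - fst x\<bar> \<le> 1" "\<bar>snd (loc i) - snd x\<bar> \<le> 1"
      using dist_fst_le[of "loc i" x] dist_snd_le[of "loc i" x] dx by (auto simp: dist_real_def)
    have li: "loc i \<in> square s" using inS iT TS by auto
    have "x \<in> cbox (0,0) (a,0) \<or> x \<in> cbox (a,0) (a,b)" using x(2) pig c1 c2 by blast
    thus "i \<in> T1 \<union> T2"
    proof
      assume "x \<in> cbox (0,0) (a,0)"
      hence "0 \<le> fst x" "fst x \<le> a" "snd x = 0"
        by (auto simp: cbox_Pair_eq mem_Times_iff)
      thus ?thesis using d1 li iT unfolding sq T1_def by auto
    next
      assume "x \<in> cbox (a,0) (a,b)"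
      hence "fst x = a" "0 \<le> snd x" "snd x \<le> b"
        by (auto simp: cbox_Pair_eq mem_Times_iff)
      thus ?thesis using d1 li iT unfolding sq T2_def by auto
    qed
  qed
  hence "card T \<le> card (T1 \<union> T2)"
    using fS TS by (intro card_mono) (auto simp: T1_def T2_def T_def)
  also have "\<dots> \<le> card T1 + card T2" by (rule card_Un_le)
  finally have "card T \<le> card T1 + card T2" .
  define d where "d = real (region_depth loc S (square s))"
  have d0: "d \<ge> 0" by (simp add: d_def)
  have "real (card T1) \<le> (2 * (a+1)+2) * (2 * 1+2) * d"
    unfolding d_def using ab TS inS
    by (intro box_count[OF fS]) (auto simp: T1_def)
  moreover have "real (card T2) \<le> (2 * 2+2) * (2 * (b+1)+2) * d"
    unfolding d_def using ab TS inS
    by (intro box_count[OF fS]) (auto simp: T2_def)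
  ultimately have "L \<le> (2 * (a+1)+2) * (2 * 1+2) * d + (2 * 2+2) * (2 * (b+1)+2) * d"
    using \<open>L \<le> real (card T)\<close> \<open>card T \<le> card T1 + card T2\<close> by linarith
  also have "\<dots> = (8 * a + 12 * b + 40) * d" by (simp add: algebra_simps)
  also have "\<dots> \<le> (60*\<kappa>) * d"
    using akb k1 d0 by (intro mult_right_mono) auto
  finally show "L \<le> 60 * \<kappa> * real (region_depth loc S (square s))" by (simp add: d_def)
qed simp

end
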